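(* Let $F$ be an infinite field of characteristic $3$, let $A_1$ be the $F$-vector space of linear forms in variables $x_1,\dots,x_m$, and let $U\subseteq A_1$ be a subspace with $\dim U=n$. Suppose $a_1<a_2<\dots<a_n$ are integers with $\mathrm{ms}_i(U)\ge a_i$ for all $1\le i\le n$. Then for each $0\le k\le n$ there exists a subspace $U_k\subseteq U$ with $\dim U_k=k$ such that $\mathrm{ms}_i(U_k)\ge a_{n-k+i}$ for all $1\le i\le k$.
   Context: For a linear form $u=\sum_i c_ix_i$, $\mathrm{supp}(u)=\{x_i:c_i\ne 0\}$. For a subspace $V$ of linear forms, $\mathrm{supp}(V)=\bigcup_{v\in V}\mathrm{supp}(v)$. For a subspace $U$ and $1\le i\le\dim U$, the minimum support function is $\mathrm{ms}_i(U)=\min\{|\mathrm{supp}(V)|: V\subseteq U \text{ a subspace}, \dim V=i\}$. *)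

theory Defs
  imports "HOL-Analysis.Analysis"
begin

text \<open>Linear forms in variables x_i (i ranging over the finite index type 'm) over a field 'a
  are represented by their coefficient vectors in 'a ^ 'm; the F-vector-space structure is the
  library interpretation vec (scalar multiplication *s).\<close>

definition supp_form :: "'a::field ^ 'm \<Rightarrow> 'm set" where
  "supp_form u = {i. u $ i \<noteq> 0}"

definition supp_space :: "('a::field ^ 'm) set \<Rightarrow> 'm set" where
  "supp_space V = (\<Union>v\<in>V. supp_form v)"

text \<open>Minimum support function ms_i(U), meaningful for 1 <= i <= dim U.\<close>
definition ms :: "nat \<Rightarrow> ('a::field ^ 'm) set \<Rightarrow> nat" where
  "ms i U = Min {card (supp_space V) | V. vec.subspace V \<and> V \<subseteq> U \<and> vec.dim V = i}"

end

theory Submission imports Defs "HOL-Computational_Algebra.Polynomial" begin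

lemma card_supp_le: "card (supp_space (V::('a::field^'m) set)) \<le> CARD('m)"
  by (rule card_mono) auto

lemma ms_le:
  fixes U Y :: "('a::field ^ 'm) set"
  assumes "vec.subspace Y" "Y \<subseteq> U" "vec.dim Y = i"
  shows "ms i U \<le> card (supp_space Y)"
  unfolding ms_def
proof (rule Min_le)
  show "finite {card (supp_space V) |V. vec.subspace V \<and> V \<subseteq> U \<and> vec.dim V = i}"
    by (rule finite_subset[of _ "{..CARD('m)}"]) (auto simp: card_supp_le)
qed (use assms in blast)

lemma exists_sub:
  fixes X :: "('a::field ^ 'm) set"
  assumes "vec.subspace X" "k \<le> vec.dim X"
  shows "\<exists>Y. vec.subspace Y \<and> Y \<subseteq> X \<and> vec.dim Y = k"
proof -
  obtain B where B: "B \<subseteq> X" "vec.independent B" "X \<subseteq> vec.span B" "card B = vec.dim X"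
    using vec.basis_exists by blast
  have fB: "finite B" using B(2) vec.finiteI_independent by blast
  obtain B' where B': "B' \<subseteq> B" "card B' = k" using obtain_subset_with_card_n[of k B] B assms by auto
  have ind: "vec.independent B'" using B' B(2) vec.independent_mono by blast
  show ?thesis
  proof (intro exI conjI)
    show "vec.subspace (vec.span B')" by simp
    show "vec.span B' \<subseteq> X" using B' B(1) assms(1) by (metis order_trans vec.span_eq_iff vec.span_mono)
    show "vec.dim (vec.span B') = k" using ind B' vec.dim_span_eq_card_independent by metis
  qed
qed

lemma ms_ge:
  fixes W :: "('a::field ^ 'm) set"
  assumes "vec.subspace W" "i \<le> vec.dim W"
    and "\<And>V. vec.subspace V \<Longrightarrow> V \<subseteq> W \<Longrightarrow> vec.dim V = i \<Longrightarrow> x \<le> card (supp_space V)"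
  shows "x \<le> ms i W"
  unfolding ms_def
proof (subst Min_ge_iff)
  show "finite {card (supp_space V) |V. vec.subspace V \<and> V \<subseteq> W \<and> vec.dim V = i}"
    by (rule finite_subset[of _ "{..CARD('m)}"]) (auto simp: card_supp_le)
  show "{card (supp_space V) |V. vec.subspace V \<and> V \<subseteq> W \<and> vec.dim V = i} \<noteq> {}"
    using exists_sub[OF assms(1,2)] by blast
qed (use assms(3) in blast)

definition phi :: "'a::field ^ 'm \<Rightarrow> 'a ^ 'm \<Rightarrow> 'a" where
  "phi c x = (\<Sum>l\<in>UNIV. c $ l * x $ l)"

lemma avoid:
  fixes X :: "('a::field ^ 'm) set"
  assumes "infinite (UNIV :: 'a set)" "finite X" "0 \<notin> X"
  shows "\<exists>c. \<forall>x\<in>X. phi c x \<noteq> 0"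
proof -
  obtain e :: "'m \<Rightarrow> nat" and N where e: "e ` UNIV = {i. i < N}" "inj e"
    using finite_imp_inj_to_nat_seg[of "UNIV :: 'm set"] by auto
  define p where "p x = (\<Sum>l\<in>UNIV. monom (x $ l) (e l))" for x :: "'a ^ 'm"
  have pev: "poly (p x) t = phi (\<chi> l. t ^ e l) x" for x t
    by (simp add: p_def phi_def poly_sum poly_monom mult.commute)
  have pnz: "p x \<noteq> 0" if "x \<in> X" for x
  proof -
    from that assms(3) have "x \<noteq> 0" by auto
    then obtain l0 where l0: "x $ l0 \<noteq> 0" by (metis vec_eq_iff zero_index)
    have "coeff (p x) (e l0) = (\<Sum>l\<in>UNIV. if e l = e l0 then x $ l else 0)"
      by (simp add: p_def coeff_sum coeff_monom)
    also have "\<dots> = (\<Sum>l\<in>UNIV. if l = l0 then x $ l else 0)"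
      using e(2) by (simp add: inj_eq)
    also have "\<dots> = x $ l0" by simp
    finally show ?thesis using l0 by auto
  qed
  have fin: "finite (\<Union>x\<in>X. {t. poly (p x) t = 0})"
    using assms(2) pnz poly_roots_finite by blast
  then obtain t where "t \<notin> (\<Union>x\<in>X. {t. poly (p x) t = 0})"
    using assms(1) by (metis ex_new_if_finite)
  then show ?thesis using pev by auto
qed

lemma phi_add: "phi c (x + y) = phi c x + phi c y"
  by (simp add: phi_def distrib_left sum.distrib)

lemma phi_scale: "phi c (r *s x) = r * phi c x"
  by (simp add: phi_def sum_distrib_left mult.left_commute)

lemma step:
  fixes U :: "('a::field ^ 'm) set"
  assumes inf: "infinite (UNIV :: 'a set)" and sU: "vec.subspace U" and d1: "1 \<le> vec.dim U"
  shows "\<exists>W. vec.subspace W \<and> W \<subseteq> U \<and> vec.dim W = vec.dim U - 1 \<and>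
     (\<forall>i. 1 \<le> i \<and> i \<le> vec.dim U - 1 \<longrightarrow> ms (i+1) U \<le> ms i W)"
proof -
  define US where "US S = {x\<in>U. \<forall>l. l \<notin> S \<longrightarrow> x $ l = 0}" for S
  have sUS: "vec.subspace (US S)" for S
  proof (rule vec.subspaceI)
    show "0 \<in> US S" using vec.subspace_0[OF sU] unfolding US_def by simp
    show "x + y \<in> US S" if "x \<in> US S" "y \<in> US S" for x y
      using that vec.subspace_add[OF sU] unfolding US_def by simp
    show "r *s x \<in> US S" if "x \<in> US S" for r x
      using that vec.subspace_scale[OF sU] unfolding US_def by simp
  qed
  have USU: "US S \<subseteq> U" for S unfolding US_def by auto
  define Fam where "Fam = {S. \<exists>x\<in>US S. x \<noteq> 0}"
  define pick where "pick S = (SOME x. x \<in> US S \<and> x \<noteq> 0)" for S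
  have pick: "pick S \<in> US S \<and> pick S \<noteq> 0" if "S \<in> Fam" for S
    unfolding pick_def by (rule someI_ex) (use that Fam_def in auto)
  have "finite (pick ` Fam)" by simp
  moreover have "0 \<notin> pick ` Fam" using pick by auto
  ultimately have "\<exists>c. \<forall>x\<in>pick ` Fam. phi c x \<noteq> 0" by (intro avoid[OF inf])
  then obtain c where c: "\<And>x. x \<in> pick ` Fam \<Longrightarrow> phi c x \<noteq> 0" by blast
  define W where "W = {x\<in>U. phi c x = 0}"
  have sW: "vec.subspace W"
  proof (rule vec.subspaceI)
    show "0 \<in> W" using vec.subspace_0[OF sU] unfolding W_def phi_def by simp
    show "x + y \<in> W" if "x \<in> W" "y \<in> W" for x y
      using that vec.subspace_add[OF sU] unfolding W_def by (simp add: phi_add)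
    show "r *s x \<in> W" if "x \<in> W" for r x
      using that vec.subspace_scale[OF sU] unfolding W_def by (simp add: phi_scale)
  qed
  have WU: "W \<subseteq> U" unfolding W_def by auto
  have "US UNIV = U" unfolding US_def by auto
  moreover have "\<not> U \<subseteq> {0}"
  proof
    assume "U \<subseteq> {0}"
    then have "vec.dim U = 0" by simp
    with d1 show False by simp
  qed
  ultimately have "UNIV \<in> Fam" unfolding Fam_def by auto
  define u0 where "u0 = pick UNIV"
  have u0U: "u0 \<in> U" using pick[OF \<open>UNIV \<in> Fam\<close>] \<open>US UNIV = U\<close> u0_def by auto
  have pu0: "phi c u0 \<noteq> 0" using c \<open>UNIV \<in> Fam\<close> u0_def by auto
  have "U \<subseteq> vec.span (insert u0 W)"
  proof
    fix u assume uU: "u \<in> U"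
    define r where "r = phi c u / phi c u0"
    have "u - r *s u0 \<in> U" using vec.subspace_diff[OF sU uU vec.subspace_scale[OF sU u0U]] .
    moreover have "phi c (u - r *s u0) = 0"
    proof -
      have "phi c (u - r *s u0) = phi c u + phi c ((- r) *s u0)"
        proof -
          have "u - r *s u0 = u + (- r) *s u0" by (simp add: vec_eq_iff)
          then show ?thesis by (simp only: phi_add)
        qed
      also have "\<dots> = 0" unfolding phi_scale r_def using pu0 by simp
      finally show ?thesis .
    qed
    ultimately have "u - r *s u0 \<in> W" unfolding W_def by auto
    have "(u - r *s u0) + r *s u0 \<in> vec.span (insert u0 W)"
      proof (rule vec.span_add)
        show "u - r *s u0 \<in> vec.span (insert u0 W)" using \<open>u - r *s u0 \<in> W\<close>
          by (intro vec.span_base) simp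
        show "r *s u0 \<in> vec.span (insert u0 W)"
          by (intro vec.span_scale vec.span_base) simp
      qed
    then show "u \<in> vec.span (insert u0 W)" by simp
  qed
  moreover have "vec.span (insert u0 W) \<subseteq> U"
    using u0U WU sU by (simp add: vec.span_minimal)
  ultimately have "vec.span (insert u0 W) = U" by auto
  then have "vec.dim U = vec.dim (insert u0 W)" by (metis vec.dim_span)
  also have "\<dots> = vec.dim W + 1"
  proof -
    have spW: "vec.span W = W" using sW by simp
    have "u0 \<notin> W" using pu0 unfolding W_def by auto
    then have "u0 \<notin> vec.span W" by (metis spW)
    then show ?thesis by (simp add: vec.dim_insert)
  qed
  finally have dW: "vec.dim W = vec.dim U - 1" by simp
  have "ms (i+1) U \<le> ms i W" if i: "1 \<le> i" "i \<le> vec.dim U - 1" for i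
  proof (rule ms_ge[OF sW])
    show "i \<le> vec.dim W" using dW i by simp
    fix V assume V: "vec.subspace V" "V \<subseteq> W" "vec.dim V = i"
    define S where "S = supp_space V"
    have VUS: "V \<subseteq> US S"
      using V WU unfolding US_def S_def supp_space_def supp_form_def by auto
    have "\<not> V \<subseteq> {0}" using V(3) i vec.dim_eq_0[of V] by auto
    then have "S \<in> Fam" using VUS unfolding Fam_def by auto
    define xS where "xS = pick S"
    have xS: "xS \<in> US S" "phi c xS \<noteq> 0" using pick[OF \<open>S \<in> Fam\<close>] c \<open>S \<in> Fam\<close> xS_def by auto
    define Z where "Z = W \<inter> US S"
    have sZ: "vec.subspace Z" unfolding Z_def by (rule vec.subspace_inter[OF sW sUS])
    have "xS \<notin> Z" using xS unfolding Z_def W_def by auto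
    moreover have "vec.span Z = Z" using sZ by simp
    ultimately have "xS \<notin> vec.span Z" by metis
    then have "vec.dim (insert xS Z) = vec.dim Z + 1" by (simp add: vec.dim_insert)
    moreover have "vec.dim (insert xS Z) \<le> vec.dim (US S)"
      using xS Z_def by (intro vec.dim_subset) auto
    moreover have "vec.dim V \<le> vec.dim Z" using V VUS Z_def by (intro vec.dim_subset) auto
    ultimately have "i + 1 \<le> vec.dim (US S)" using V(3) by simp
    then obtain Y where Y: "vec.subspace Y" "Y \<subseteq> US S" "vec.dim Y = i + 1"
      using exists_sub[OF sUS] by blast
    have "ms (i+1) U \<le> card (supp_space Y)"
      using ms_le[OF Y(1) _ Y(3)] Y(2) USU by blast
    also have "\<dots> \<le> card S"
      using Y(2) by (intro card_mono) (auto simp: US_def supp_space_def supp_form_def)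
    finally show "ms (i+1) U \<le> card (supp_space V)" using S_def by simp
  qed
  then show ?thesis using sW WU dW by blast
qed

theorem lemma6:
  fixes U :: "('a::field ^ 'm) set"
    and n :: nat
    and a :: "nat \<Rightarrow> int"
  assumes "infinite (UNIV :: 'a set)"
    and "CHAR('a) = 3"
    and "vec.subspace U"
    and "vec.dim U = n"
    and "\<And>i j. 1 \<le> i \<Longrightarrow> i < j \<Longrightarrow> j \<le> n \<Longrightarrow> a i < a j"
    and "\<And>i. 1 \<le> i \<Longrightarrow> i \<le> n \<Longrightarrow> int (ms i U) \<ge> a i"
  shows "\<forall>k \<le> n. \<exists>Uk. vec.subspace Uk \<and> Uk \<subseteq> U \<and> vec.dim Uk = k \<and>
           (\<forall>i. 1 \<le> i \<and> i \<le> k \<longrightarrow> int (ms i Uk) \<ge> a (n - k + i))"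
proof -
  have claim: "d \<le> n \<Longrightarrow> \<exists>Uk. vec.subspace Uk \<and> Uk \<subseteq> U \<and> vec.dim Uk = n - d \<and>
           (\<forall>i. 1 \<le> i \<and> i \<le> n - d \<longrightarrow> int (ms i Uk) \<ge> a (d + i))" for d
  proof (induction d)
    case 0
    then show ?case using assms(3,4,6) by auto
  next
    case (Suc d)
    then obtain Uk where Uk: "vec.subspace Uk" "Uk \<subseteq> U" "vec.dim Uk = n - d"
      "\<And>i. 1 \<le> i \<Longrightarrow> i \<le> n - d \<Longrightarrow> int (ms i Uk) \<ge> a (d + i)" by auto
    have "1 \<le> vec.dim Uk" using Uk(3) Suc.prems by simp
    then obtain W where W: "vec.subspace W" "W \<subseteq> Uk" "vec.dim W = vec.dim Uk - 1"
      "\<And>i. 1 \<le> i \<Longrightarrow> i \<le> vec.dim Uk - 1 \<Longrightarrow> ms (i+1) Uk \<le> ms i W"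
      using step[OF assms(1) Uk(1)] by blast
    show ?case
    proof (intro exI conjI allI impI)
      show "vec.subspace W" "W \<subseteq> U" "vec.dim W = n - Suc d" using W Uk by auto
      fix i assume i: "1 \<le> i \<and> i \<le> n - Suc d"
      then have "a (d + (i+1)) \<le> int (ms (i+1) Uk)" using Uk(4)[of "i+1"] Suc.prems by auto
      also have "\<dots> \<le> int (ms i W)" using W(4)[of i] i Uk(3) by simp
      finally show "a (Suc d + i) \<le> int (ms i W)" by simp
    qed
  qed
  show ?thesis
  proof (intro allI impI)
    fix k assume "k \<le> n"
    then show "\<exists>Uk. vec.subspace Uk \<and> Uk \<subseteq> U \<and> vec.dim Uk = k \<and>
           (\<forall>i. 1 \<le> i \<and> i \<le> k \<longrightarrow> int (ms i Uk) \<ge> a (n - k + i))"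
      using claim[of "n - k"] by simp
  qed
qed

end
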